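(* Let $X$ be a quasi-Banach function space over $\mathbf{R}^d$ for which $X'\ne\{0\}$. If $\mathbf{1}_{\mathbf{R}^d}\in X$, then $M$ is not bounded from $X'$ to $X'$.
   Context: A quasi-Banach function space over $\mathbf{R}^d$ is a complete quasi-normed space $X\subseteq L^0(\mathbf{R}^d)$ with the ideal property (if $f\in X$, $|g|\le|f|$ then $g\in X$, $\|g\|_X\le\|f\|_X$) and the saturation property (every set of positive measure contains a subset $F$ of positive measure with $\mathbf{1}_F\in X$). Köthe dual: $X'=\{g:fg\in L^1(\mathbf{R}^d)\ \forall f\in X\}$ with $\|g\|_{X'}=\sup_{\|f\|_X=1}\int|fg|$. $M$ is the Hardy–Littlewood maximal operator over axis-parallel cubes. *)

theory Defs
  imports "HOL-Analysis.Analysis"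
begin

text \<open>Functions on R^d are modelled as real-valued functions on a Euclidean space 'a,
  with Lebesgue measure; L^0 classes are handled via almost-everywhere statements.\<close>

definition qBFS :: "('a::euclidean_space \<Rightarrow> real) set \<Rightarrow> (('a \<Rightarrow> real) \<Rightarrow> real) \<Rightarrow> bool" where
  "qBFS X n \<longleftrightarrow>
     X \<subseteq> borel_measurable lebesgue \<and>
     \<comment> \<open>vector space\<close>
     (\<lambda>x. 0) \<in> X \<and>
     (\<forall>f\<in>X. \<forall>g\<in>X. (\<lambda>x. f x + g x) \<in> X) \<and>
     (\<forall>f\<in>X. \<forall>c::real. (\<lambda>x. c * f x) \<in> X) \<and>
     \<comment> \<open>quasi-norm\<close>
     (\<forall>f\<in>X. 0 \<le> n f) \<and>
     (\<forall>f\<in>X. n f = 0 \<longleftrightarrow> (AE x in lebesgue. f x = 0)) \<and>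
     (\<forall>f\<in>X. \<forall>c::real. n (\<lambda>x. c * f x) = \<bar>c\<bar> * n f) \<and>
     (\<exists>K\<ge>1. \<forall>f\<in>X. \<forall>g\<in>X. n (\<lambda>x. f x + g x) \<le> K * (n f + n g)) \<and>
     \<comment> \<open>completeness\<close>
     (\<forall>u::nat \<Rightarrow> 'a \<Rightarrow> real. (\<forall>k. u k \<in> X) \<and>
        (\<forall>e>0. \<exists>N. \<forall>i\<ge>N. \<forall>j\<ge>N. n (\<lambda>x. u i x - u j x) < e) \<longrightarrow>
        (\<exists>f\<in>X. (\<lambda>k. n (\<lambda>x. u k x - f x)) \<longlonglongrightarrow> 0)) \<and>
     \<comment> \<open>ideal property\<close>
     (\<forall>f\<in>X. \<forall>g\<in>borel_measurable lebesgue.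
        (AE x in lebesgue. \<bar>g x\<bar> \<le> \<bar>f x\<bar>) \<longrightarrow> g \<in> X \<and> n g \<le> n f) \<and>
     \<comment> \<open>saturation property\<close>
     (\<forall>E\<in>sets lebesgue. emeasure lebesgue E > 0 \<longrightarrow>
        (\<exists>F\<in>sets lebesgue. F \<subseteq> E \<and> emeasure lebesgue F > 0 \<and> indicator F \<in> X))"

text \<open>Koethe dual and its norm (possibly infinite a priori, hence ennreal).\<close>

definition kothe_dual :: "('a::euclidean_space \<Rightarrow> real) set \<Rightarrow> ('a \<Rightarrow> real) set" where
  "kothe_dual X = {g \<in> borel_measurable lebesgue. \<forall>f\<in>X. integrable lebesgue (\<lambda>x. f x * g x)}"

definition kothe_norm :: "('a::euclidean_space \<Rightarrow> real) set \<Rightarrow> (('a \<Rightarrow> real) \<Rightarrow> real) \<Rightarrow> ('a \<Rightarrow> real) \<Rightarrow> ennreal" where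
  "kothe_norm X n g = (SUP f\<in>{f\<in>X. n f = 1}. \<integral>\<^sup>+ x. ennreal \<bar>f x * g x\<bar> \<partial>lebesgue)"

definition cube :: "'a::euclidean_space \<Rightarrow> real \<Rightarrow> 'a set" where
  "cube a r = cbox a (a + r *\<^sub>R One)"

definition maximal_op :: "('a::euclidean_space \<Rightarrow> real) \<Rightarrow> 'a \<Rightarrow> ennreal" where
  "maximal_op f x = (SUP ar\<in>{(a, r). r > 0 \<and> x \<in> cube a r}.
      (\<integral>\<^sup>+ y. ennreal \<bar>f y\<bar> * indicator (cube (fst ar) (snd ar)) y \<partial>lebesgue)
        / emeasure lebesgue (cube (fst ar) (snd ar)))"

definition maximal_bounded_on :: "('a::euclidean_space \<Rightarrow> real) set \<Rightarrow> (('a \<Rightarrow> real) \<Rightarrow> ennreal) \<Rightarrow> bool" where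
  "maximal_bounded_on Y N \<longleftrightarrow>
     (\<exists>C::real. \<forall>g\<in>Y. (AE x in lebesgue. maximal_op g x < \<infinity>) \<and>
        (\<lambda>x. enn2real (maximal_op g x)) \<in> Y \<and>
        N (\<lambda>x. enn2real (maximal_op g x)) \<le> ennreal C * N g)"

end

theory Submission
  imports Defs
begin

definition Cb :: "real \<Rightarrow> 'a::euclidean_space set" where
  "Cb t = cbox (-(t *\<^sub>R One)) (t *\<^sub>R One)"

lemma mem_Cb: "x \<in> (Cb t :: 'a::euclidean_space set) \<longleftrightarrow> (\<forall>b\<in>Basis. \<bar>x \<bullet> b\<bar> \<le> t)"
  unfolding Cb_def mem_box by (auto simp: inner_minus_left abs_le_iff)

lemma cube_Cb: "cube (-(t *\<^sub>R One)) (2*t) = (Cb t :: 'a::euclidean_space set)"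
proof -
  have "-(t *\<^sub>R One) + (2*t) *\<^sub>R (One::'a) = t *\<^sub>R One"
    by (simp add: algebra_simps scaleR_left_distrib[symmetric])
  then show ?thesis unfolding cube_def Cb_def by simp
qed

lemma Cb_sets[simp, measurable]: "Cb t \<in> sets lebesgue"
  unfolding Cb_def by simp

lemma emeasure_Cb:
  assumes "0 \<le> t"
  shows "emeasure lebesgue (Cb t :: 'a::euclidean_space set) = ennreal ((2*t) ^ DIM('a))"
proof -
  have "emeasure lebesgue (Cb t :: 'a set) = emeasure lborel (Cb t :: 'a set)"
    unfolding Cb_def by simp
  also have "\<dots> = ennreal (prod ((\<bullet>) (t *\<^sub>R One - (-(t *\<^sub>R (One::'a))))) Basis)"
    unfolding Cb_def using assms by (intro emeasure_lborel_cbox) (simp add: inner_minus_left)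
  also have "prod ((\<bullet>) (t *\<^sub>R One - (-(t *\<^sub>R (One::'a))))) Basis = prod (\<lambda>_. 2*t) (Basis::'a set)"
    by (intro prod.cong) (auto simp: inner_diff_left inner_minus_left inner_add_left)
  also have "\<dots> = (2*t) ^ DIM('a)" by simp
  finally show ?thesis .
qed

lemma Cb_mono: "s \<le> t \<Longrightarrow> Cb s \<subseteq> Cb t"
  unfolding mem_Cb by (auto simp: mem_Cb) (meson order_trans)

lemma maximal_lower:
  fixes g :: "'a::euclidean_space \<Rightarrow> real"
  assumes "R \<le> t" "0 < t" "x \<in> Cb t"
  shows "(\<integral>\<^sup>+ y. ennreal \<bar>g y\<bar> * indicator (Cb R) y \<partial>lebesgue) / ennreal ((2*t) ^ DIM('a))
           \<le> maximal_op g x"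
proof -
  let ?a = "-(t *\<^sub>R (One::'a))" and ?r = "2*t"
  have mem: "(?a, ?r) \<in> {(a, r). r > 0 \<and> x \<in> cube a r}"
    using assms cube_Cb[of t] by auto
  have "(\<integral>\<^sup>+ y. ennreal \<bar>g y\<bar> * indicator (Cb R) y \<partial>lebesgue)
        \<le> (\<integral>\<^sup>+ y. ennreal \<bar>g y\<bar> * indicator (cube ?a ?r) y \<partial>lebesgue)"
    unfolding cube_Cb using Cb_mono[OF assms(1)]
    by (intro nn_integral_mono) (auto simp: indicator_def)
  then have le: "(\<integral>\<^sup>+ y. ennreal \<bar>g y\<bar> * indicator (Cb R) y \<partial>lebesgue) / ennreal ((2*t) ^ DIM('a))
     \<le> (\<integral>\<^sup>+ y. ennreal \<bar>g y\<bar> * indicator (Cb t) y \<partial>lebesgue) / ennreal ((2*t) ^ DIM('a))"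
    unfolding cube_Cb by (rule divide_right_mono_ennreal)
  have em: "emeasure lebesgue (Cb t :: 'a set) = ennreal ((2*t)^DIM('a))"
    using emeasure_Cb[of t, where 'a='a] assms by simp
  have "(\<integral>\<^sup>+ y. ennreal \<bar>g y\<bar> * indicator (Cb R) y \<partial>lebesgue) / ennreal ((2*t) ^ DIM('a))
     \<le> (\<integral>\<^sup>+ y. ennreal \<bar>g y\<bar> * indicator (cube (fst (?a,?r)) (snd (?a,?r))) y \<partial>lebesgue)
        / emeasure lebesgue (cube (fst (?a,?r)) (snd (?a,?r)))"
    unfolding fst_conv snd_conv cube_Cb em by (rule le)
  also have "\<dots> \<le> maximal_op g x"
    unfolding maximal_op_def by (rule SUP_upper[OF mem])
  finally show ?thesis .
qed

lemma Cb_disj: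
  assumes "x \<in> Cb (2^(k+1)) - Cb (2^k)" "x \<in> Cb (2^(i+1)) - Cb (2^i)"
  shows "k = i"
proof (rule ccontr)
  assume "k \<noteq> i"
  then consider "k < i" | "i < k" by linarith
  then show False
  proof cases
    case 1
    then have "(2::real)^(k+1) \<le> 2^i" by (intro power_increasing) auto
    then show False using assms Cb_mono by blast
  next
    case 2
    then have "(2::real)^(i+1) \<le> 2^k" by (intro power_increasing) auto
    then show False using assms Cb_mono by blast
  qed
qed

lemma arith1: "(P::real) > 0 \<Longrightarrow> u > 0 \<Longrightarrow> m / (P*u) * (P*u - u) = m * (P - 1) / P"
  by (simp add: field_simps)

lemma arith2: "(P::real) \<ge> 2 \<Longrightarrow> m > 0 \<Longrightarrow> m / 2 \<le> m * (P - 1) / P"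
  by (simp add: field_simps)

lemma maximal_not_integrable:
  fixes g :: "'a::euclidean_space \<Rightarrow> real"
  assumes gm: "g \<in> borel_measurable lebesgue" and nz: "\<not> (AE x in lebesgue. g x = 0)"
  shows "(\<integral>\<^sup>+ x. maximal_op g x \<partial>lebesgue) = \<infinity>"
proof -
  let ?d = "DIM('a)"
  have "\<exists>j::nat. (\<integral>\<^sup>+ y. ennreal \<bar>g y\<bar> * indicator (Cb (real j)) y \<partial>lebesgue) \<noteq> 0"
  proof (rule ccontr)
    assume H: "\<not> ?thesis"
    have Aj: "\<And>j::nat. AE y in lebesgue. ennreal \<bar>g y\<bar> * indicator (Cb (real j)) y = 0"
    proof -
      fix j :: nat
      have meas: "(\<lambda>y. ennreal \<bar>g y\<bar> * indicator (Cb (real j)) y) \<in> borel_measurable lebesgue"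
        using gm by measurable
      have "(\<integral>\<^sup>+ y. ennreal \<bar>g y\<bar> * indicator (Cb (real j)) y \<partial>lebesgue) = 0"
        using H by blast
      then show "AE y in lebesgue. ennreal \<bar>g y\<bar> * indicator (Cb (real j)) y = 0"
        by (rule iffD1[OF nn_integral_0_iff_AE[OF meas]])
    qed
    then have "AE y in lebesgue. \<forall>j::nat. ennreal \<bar>g y\<bar> * indicator (Cb (real j)) y = 0"
      unfolding AE_all_countable using Aj by blast
    then have "AE y in lebesgue. g y = 0"
    proof (rule eventually_mono)
      fix y :: 'a
      assume h: "\<forall>j::nat. ennreal \<bar>g y\<bar> * indicator (Cb (real j)) y = 0"
      obtain j :: nat where "norm y \<le> real j" using real_arch_simple by blast
      then have "y \<in> Cb (real j)" unfolding mem_Cb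
      proof (intro ballI)
        fix b :: 'a assume "b \<in> Basis"
        then have "\<bar>y \<bullet> b\<bar> \<le> norm y" by (rule Basis_le_norm)
        then show "\<bar>y \<bullet> b\<bar> \<le> real j" using \<open>norm y \<le> real j\<close> by linarith
      qed
      then show "g y = 0" using h[rule_format, of j] by auto
    qed
    then show False using nz by simp
  qed
  then obtain j :: nat where j: "(\<integral>\<^sup>+ y. ennreal \<bar>g y\<bar> * indicator (Cb (real j)) y \<partial>lebesgue) \<noteq> 0"
    by blast
  define m' where "m' = (\<integral>\<^sup>+ y. ennreal \<bar>g y\<bar> * indicator (Cb (real j)) y \<partial>lebesgue)"
  have "0 < m'" using j unfolding m'_def by (simp add: zero_less_iff_neq_zero)
  then obtain e where e: "0 < e" "e < m'" using dense[OF \<open>0 < m'\<close>] by blast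
  define m where "m = enn2real e"
  have "e < top" using e(2) top.not_eq_extremum by fastforce
  then have em: "e = ennreal m" unfolding m_def by simp
  have mpos: "0 < m" using e em by auto
  have mle: "ennreal m \<le> m'" using e em by simp
  define S where "S k = (Cb (2^(k+1)) - Cb (2^k) :: 'a set)" for k :: nat
  define c where "c k = m / (2*2^(k+1)) ^ ?d" for k :: nat
  have lower: "ennreal (c k) \<le> maximal_op g x" if "j \<le> k" "x \<in> S k" for k x
  proof -
    have "j < 2^j" by (rule less_exp)
    then have "real j < real (2^j)" by (simp only: of_nat_less_iff)
    then have "real j \<le> 2^j" by simp
    also have "(2::real)^j \<le> 2^(k+1)" by (intro power_increasing) (use that in auto)
    finally have R: "real j \<le> 2^(k+1)" .
    have "ennreal (c k) = ennreal m / ennreal ((2*2^(k+1)) ^ ?d)"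
      unfolding c_def using mpos by (simp add: divide_ennreal)
    also have "\<dots> \<le> m' / ennreal ((2*2^(k+1)) ^ ?d)"
      by (rule divide_right_mono_ennreal[OF mle])
    also have "\<dots> \<le> maximal_op g x"
      unfolding m'_def by (rule maximal_lower) (use R that in \<open>auto simp: S_def\<close>)
    finally show ?thesis .
  qed
  have big: "ennreal (real N * m / 2) \<le> (\<integral>\<^sup>+ x. maximal_op g x \<partial>lebesgue)" for N
  proof -
    define \<phi> where "\<phi> x = (\<Sum>k\<in>{j..<j+N}. ennreal (c k) * indicator (S k) x)" for x
    have pt: "\<phi> x \<le> maximal_op g x" for x
    proof (cases "\<exists>i\<in>{j..<j+N}. x \<in> S i")
      case True
      then obtain i where i: "i \<in> {j..<j+N}" "x \<in> S i" by blast
      have tm: "ennreal (c k) * indicator (S k) x = (if k = i then ennreal (c i) else 0)" for k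
      proof (cases "k = i")
        case True
        then show ?thesis using i(2) by simp
      next
        case False
        have "x \<notin> S k"
        proof
          assume "x \<in> S k"
          then have "k = i" using i(2) Cb_disj[of x k i] unfolding S_def by blast
          then show False using False by blast
        qed
        then show ?thesis using False by simp
      qed
      have "\<phi> x = (\<Sum>k\<in>{j..<j+N}. if k = i then ennreal (c i) else 0)"
        unfolding \<phi>_def by (rule sum.cong[OF refl tm])
      also have "\<dots> = ennreal (c i)" using i(1) by (simp only: sum.delta finite_atLeastLessThan if_True)
      finally have eq: "\<phi> x = ennreal (c i)" .
      have "j \<le> i" using i(1) by simp
      then show ?thesis unfolding eq using i(2) by (rule lower)
    next
      case False
      have "\<phi> x = 0" unfolding \<phi>_def
      proof (rule sum.neutral, rule ballI)
        fix k assume "k \<in> {j..<j+N}"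
        then have "x \<notin> S k" using False by blast
        then show "ennreal (c k) * indicator (S k) x = 0" by simp
      qed
      then show ?thesis by simp
    qed
    have meas: "emeasure lebesgue (S k) = ennreal ((2*2^(k+1)) ^ ?d - (2*2^k) ^ ?d)" for k
    proof -
      have "emeasure lebesgue (S k) = emeasure lebesgue (Cb (2^(k+1)) :: 'a set) - emeasure lebesgue (Cb (2^k) :: 'a set)"
      proof -
        have sub: "Cb (2^k) \<subseteq> (Cb (2^(k+1)) :: 'a set)" by (rule Cb_mono) simp
        have fin: "emeasure lebesgue (Cb (2^k) :: 'a set) \<noteq> \<infinity>"
          using emeasure_Cb[of "2^k", where 'a='a] by simp
        show ?thesis unfolding S_def by (rule emeasure_Diff[OF fin Cb_sets Cb_sets sub])
      qed
      also have "\<dots> = ennreal ((2*2^(k+1)) ^ ?d - (2*2^k) ^ ?d)"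
      proof -
        have e1: "emeasure lebesgue (Cb (2^(k+1)) :: 'a set) = ennreal ((2*2^(k+1))^?d)"
          by (rule emeasure_Cb) simp
        have e2: "emeasure lebesgue (Cb (2^k) :: 'a set) = ennreal ((2*2^k)^?d)"
          by (rule emeasure_Cb) simp
        show ?thesis unfolding e1 e2 by (rule ennreal_minus) simp
      qed
      finally show ?thesis .
    qed
    have ck: "m / 2 \<le> c k * ((2*2^(k+1)) ^ ?d - (2*2^k) ^ ?d)" for k
    proof -
      define u :: real where "u = (2*2^k) ^ ?d"
      have u: "0 < u" unfolding u_def by simp
      have "(2*2^(k+1)::real) = 2*(2*2^k)" by simp
      then have eq: "(2*2^(k+1)) ^ ?d = 2^?d * u" unfolding u_def
        by (simp only: power_mult_distrib)
      have "(2::real)^1 \<le> 2^?d" by (rule power_increasing) (use DIM_positive[where 'a='a] in auto)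
      then have p: "(2::real) \<le> 2^?d" by simp
      have "c k * ((2*2^(k+1)) ^ ?d - (2*2^k) ^ ?d) = m * (2^?d - 1) / 2^?d"
        unfolding c_def eq u_def[symmetric] using u p by (intro arith1) auto
      also have "m / 2 \<le> \<dots>" using p mpos by (intro arith2) auto
      ultimately show ?thesis by simp
    qed
    have I1: "(\<integral>\<^sup>+ x. \<phi> x \<partial>lebesgue) = (\<Sum>k\<in>{j..<j+N}. ennreal (c k) * emeasure lebesgue (S k))"
      unfolding \<phi>_def
    proof (subst nn_integral_sum)
      show "(\<lambda>x. ennreal (c k) * indicator (S k) x) \<in> borel_measurable lebesgue" for k
        unfolding S_def by measurable
      show "(\<Sum>k\<in>{j..<j+N}. \<integral>\<^sup>+ x. ennreal (c k) * indicator (S k) x \<partial>lebesgue)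
          = (\<Sum>k\<in>{j..<j+N}. ennreal (c k) * emeasure lebesgue (S k))"
        by (intro sum.cong refl nn_integral_cmult_indicator) (simp add: S_def)
    qed
    have I2: "(\<Sum>k\<in>{j..<j+N}. ennreal (c k) * emeasure lebesgue (S k))
        = (\<Sum>k\<in>{j..<j+N}. ennreal (c k * ((2*2^(k+1)) ^ ?d - (2*2^k) ^ ?d)))"
    proof (intro sum.cong refl)
      fix k
      have "0 \<le> c k" unfolding c_def using mpos by simp
      then show "ennreal (c k) * emeasure lebesgue (S k) = ennreal (c k * ((2*2^(k+1)) ^ ?d - (2*2^k) ^ ?d))"
        unfolding meas by (simp add: ennreal_mult)
    qed
    have I3: "(\<Sum>k\<in>{j..<j+N}. ennreal (m / 2)) \<le> (\<Sum>k\<in>{j..<j+N}. ennreal (c k * ((2*2^(k+1)) ^ ?d - (2*2^k) ^ ?d)))"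
      by (intro sum_mono ennreal_leI ck)
    have I4: "(\<Sum>k\<in>{j..<j+N}. ennreal (m / 2)) = ennreal (real N * m / 2)"
      using mpos by (simp add: ennreal_of_nat_eq_real_of_nat ennreal_mult[symmetric])
    have "ennreal (real N * m / 2) \<le> (\<integral>\<^sup>+ x. \<phi> x \<partial>lebesgue)"
      using I1 I2 I3 I4 by simp
    also have "\<dots> \<le> (\<integral>\<^sup>+ x. maximal_op g x \<partial>lebesgue)"
      by (intro nn_integral_mono pt)
    finally show ?thesis .
  qed
  show ?thesis
  proof (rule ccontr)
    assume "(\<integral>\<^sup>+ x. maximal_op g x \<partial>lebesgue) \<noteq> \<infinity>"
    then obtain B where B: "(\<integral>\<^sup>+ x. maximal_op g x \<partial>lebesgue) = ennreal B" "0 \<le> B"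
      using ennreal_cases[of "\<integral>\<^sup>+ x. maximal_op g x \<partial>lebesgue"] by auto
    obtain N :: nat where N: "2 * B / m < real N" using reals_Archimedean2 by blast
    have "real N * m / 2 \<le> B" using big[of N] B by (simp add: ennreal_le_iff)
    moreover have "2 * B < real N * m" using N mpos by (simp add: pos_divide_less_eq)
    ultimately show False by linarith
  qed
qed

theorem proposition4p6:
  fixes X :: "('a::euclidean_space \<Rightarrow> real) set" and n :: "('a \<Rightarrow> real) \<Rightarrow> real"
  assumes "qBFS X n"
    and "\<exists>g\<in>kothe_dual X. \<not> (AE x in lebesgue. g x = 0)"
    and "(\<lambda>x. 1) \<in> X"
  shows "\<not> maximal_bounded_on (kothe_dual X) (kothe_norm X n)"
proof
  assume "maximal_bounded_on (kothe_dual X) (kothe_norm X n)"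
  then obtain C :: real where C: "\<forall>g\<in>kothe_dual X. (AE x in lebesgue. maximal_op g x < \<infinity>) \<and>
        (\<lambda>x. enn2real (maximal_op g x)) \<in> kothe_dual X"
    unfolding maximal_bounded_on_def by blast
  obtain g where g: "g \<in> kothe_dual X" "\<not> (AE x in lebesgue. g x = 0)" using assms(2) by blast
  have gm: "g \<in> borel_measurable lebesgue" using g(1) unfolding kothe_dual_def by simp
  have Cg: "(AE x in lebesgue. maximal_op g x < \<infinity>) \<and> (\<lambda>x. enn2real (maximal_op g x)) \<in> kothe_dual X"
    using C g(1) by (rule bspec)
  then have fin: "AE x in lebesgue. maximal_op g x < \<infinity>" by (rule conjunct1)
  from Cg have "(\<lambda>x. enn2real (maximal_op g x)) \<in> kothe_dual X" by (rule conjunct2)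
  then have "\<forall>f\<in>X. integrable lebesgue (\<lambda>x. f x * enn2real (maximal_op g x))"
    unfolding kothe_dual_def by simp
  then have "integrable lebesgue (\<lambda>x. 1 * enn2real (maximal_op g x))"
    using assms(3) by (rule bspec)
  then have "integrable lebesgue (\<lambda>x. enn2real (maximal_op g x))" by simp
  then have "(\<integral>\<^sup>+ x. ennreal (norm (enn2real (maximal_op g x))) \<partial>lebesgue) < \<infinity>"
    by (simp only: integrable_iff_bounded)
  also have "(\<integral>\<^sup>+ x. ennreal (norm (enn2real (maximal_op g x))) \<partial>lebesgue)
      = (\<integral>\<^sup>+ x. maximal_op g x \<partial>lebesgue)"
  proof (rule nn_integral_cong_AE)
    show "AE x in lebesgue. ennreal (norm (enn2real (maximal_op g x))) = maximal_op g x"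
      using fin
    proof (rule eventually_mono)
      fix x assume "maximal_op g x < \<infinity>"
      then show "ennreal (norm (enn2real (maximal_op g x))) = maximal_op g x" by simp
    qed
  qed
  finally have "(\<integral>\<^sup>+ x. maximal_op g x \<partial>lebesgue) < \<infinity>" .
  then show False using maximal_not_integrable[OF gm g(2)] by simp
qed

end
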